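(* Let $G_{\mathrm{vc}}$ be a vertex-capacitated graph with node-weighting $A_{\mathrm{vc}}$, and $G_{\mathrm{ec}}$ the corresponding directed edge-capacitated graph with node-weighting $A_{\mathrm{ec}}$. Then: (1) If there is an $h\cdot s$-length moving cut $C$ of $G_{\mathrm{vc}}$ with $\mathrm{spars}_{(h,s)}(C,A_{\mathrm{vc}})<\phi$, then there exists an $h\cdot s$-length moving cut $C'$ of $G_{\mathrm{ec}}$ with $\mathrm{spars}_{(h,s)}(C',A_{\mathrm{ec}})<3\phi$. (2) If there is an $h\cdot s$-length moving cut $C'$ of $G_{\mathrm{ec}}$ with $\mathrm{spars}_{(h,s)}(C',A_{\mathrm{ec}})<\phi$, then there exists an $h\cdot s$-length moving cut $C$ of $G_{\mathrm{vc}}$ with $\mathrm{spars}_{(h,s)}(C,A_{\mathrm{vc}})<\phi$.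
   Context: Vertex-capacitated graph: finite undirected graph with positive integer lengths $\ell$ and capacities $u$ on vertices and edges; path length sums vertex and edge lengths. Corresponding directed graph $G_{\mathrm{ec}}$: for each vertex $v$, vertices $v_{\mathrm{in}},v_{\mathrm{mid}},v_{\mathrm{out}}$ and directed edges $(v_{\mathrm{in}},v_{\mathrm{mid}}),(v_{\mathrm{mid}},v_{\mathrm{out}}),(v_{\mathrm{in}},v_{\mathrm{out}})$ of length $\ell(v)$, capacity $u(v)$; for each edge $e=\{u,v\}$, directed edges $(u_{\mathrm{out}},v_{\mathrm{in}}),(v_{\mathrm{out}},u_{\mathrm{in}})$ of length $\ell(e)$, capacity $u(e)$; $A_{\mathrm{ec}}(v_{\mathrm{mid}})=A_{\mathrm{vc}}(v)$, zero elsewhere. General notions: demand $D\ge0$ on ordered pairs; $A$-respecting: $\max\{\sum_wD(v,w),\sum_wD(w,v)\}\le A(v)$; $h$-length: $D(v,w)>0\Rightarrow\mathrm{dist}(v,w)\le h$; symmetric: $D(v,w)=D(w,v)$. An $H$-length moving cut assigns each edge (and in $G_{\mathrm{vc}}$ also each vertex) $x$ a value $C(x)\in\{0,\tfrac1H,\dots\}\cap[0,1]$; $|C|=\sum_xu(x)C(x)$; $G-C$ has lengths $\ell(x)+H\cdot C(x)$; $\mathrm{sep}_{h'}(C,D)=\sum_{(u,v):\mathrm{dist}_{G-C}(u,v)>h'}D(u,v)$; $\mathrm{spars}_{h'}(C,D)=|C|/\mathrm{sep}_{h'}(C,D)$. For an $hs$-length cut $C$, $\mathrm{spars}_{(h,s)}(C,A)=\min\mathrm{spars}_{hs}(C,D)$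 over $A$-respecting $h$-length demands $D$, which in the directed graph $G_{\mathrm{ec}}$ are additionally required to be symmetric (zero separation counts as $+\infty$). *)

theory Defs
  imports Complex_Main "HOL-Library.Extended_Real"
begin

definition cut_val :: "nat \<Rightarrow> real \<Rightarrow> bool" where
  "cut_val H c \<longleftrightarrow> (\<exists>k::nat. c = real k / real H) \<and> 0 \<le> c \<and> c \<le> 1"

definition demand_ok ::
  "'w set \<Rightarrow> ('w \<Rightarrow> 'w \<Rightarrow> ereal) \<Rightarrow> ('w \<Rightarrow> real) \<Rightarrow> nat \<Rightarrow> ('w \<Rightarrow> 'w \<Rightarrow> real) \<Rightarrow> bool" where
  "demand_ok W d A h D \<longleftrightarrow>
     (\<forall>v w. 0 \<le> D v w) \<and>
     (\<forall>v w. (v \<notin> W \<or> w \<notin> W) \<longrightarrow> D v w = 0) \<and>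
     (\<forall>v\<in>W. max (\<Sum>w\<in>W. D v w) (\<Sum>w\<in>W. D w v) \<le> A v) \<and>
     (\<forall>v w. D v w > 0 \<longrightarrow> d v w \<le> ereal (real h))"

definition symmetric_demand :: "('w \<Rightarrow> 'w \<Rightarrow> real) \<Rightarrow> bool" where
  "symmetric_demand D \<longleftrightarrow> (\<forall>v w. D v w = D w v)"

text \<open>sep_{h'}(C,D), where distC is the distance in G - C.\<close>
definition sep :: "'w set \<Rightarrow> ('w \<Rightarrow> 'w \<Rightarrow> ereal) \<Rightarrow> nat \<Rightarrow> ('w \<Rightarrow> 'w \<Rightarrow> real) \<Rightarrow> real" where
  "sep W distC h' D = (\<Sum>p\<in>W \<times> W. if distC (fst p) (snd p) > ereal (real h') then D (fst p) (snd p) else 0)"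

definition spars_val :: "real \<Rightarrow> real \<Rightarrow> ereal" where
  "spars_val csize sepv = (if sepv = 0 then \<infinity> else ereal (csize / sepv))"

definition vc_graph ::
  "'v set \<Rightarrow> 'v set set \<Rightarrow> ('v \<Rightarrow> nat) \<Rightarrow> ('v set \<Rightarrow> nat) \<Rightarrow> ('v \<Rightarrow> nat) \<Rightarrow> ('v set \<Rightarrow> nat)
   \<Rightarrow> ('v \<Rightarrow> real) \<Rightarrow> bool" where
  "vc_graph V E lv le uv ue A \<longleftrightarrow>
     finite V \<and> (\<forall>e\<in>E. \<exists>a b. a \<in> V \<and> b \<in> V \<and> a \<noteq> b \<and> e = {a, b}) \<and>
     (\<forall>v\<in>V. lv v > 0 \<and> uv v > 0) \<and> (\<forall>e\<in>E. le e > 0 \<and> ue e > 0) \<and>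
     (\<forall>v\<in>V. A v \<ge> 0)"

definition vc_path :: "'v set \<Rightarrow> 'v set set \<Rightarrow> 'v list \<Rightarrow> bool" where
  "vc_path V E p \<longleftrightarrow> p \<noteq> [] \<and> distinct p \<and> set p \<subseteq> V \<and>
     (\<forall>i. i + 1 < length p \<longrightarrow> {p ! i, p ! (i + 1)} \<in> E)"

definition vc_len :: "('v \<Rightarrow> real) \<Rightarrow> ('v set \<Rightarrow> real) \<Rightarrow> 'v list \<Rightarrow> real" where
  "vc_len lv le p = (\<Sum>i<length p. lv (p ! i)) + (\<Sum>i<length p - 1. le {p ! i, p ! (i + 1)})"

definition vc_dist :: "'v set \<Rightarrow> 'v set set \<Rightarrow> ('v \<Rightarrow> real) \<Rightarrow> ('v set \<Rightarrow> real) \<Rightarrow> 'v \<Rightarrow> 'v \<Rightarrow> ereal" where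
  "vc_dist V E lv le v w =
     (if v = w then 0
      else (INF p \<in> {p. vc_path V E p \<and> hd p = v \<and> last p = w}. ereal (vc_len lv le p)))"

definition vc_cut :: "nat \<Rightarrow> 'v set \<Rightarrow> 'v set set \<Rightarrow> ('v \<Rightarrow> real) \<Rightarrow> ('v set \<Rightarrow> real) \<Rightarrow> bool" where
  "vc_cut H V E Cv Ce \<longleftrightarrow> (\<forall>v\<in>V. cut_val H (Cv v)) \<and> (\<forall>e\<in>E. cut_val H (Ce e))"

definition vc_cut_size ::
  "'v set \<Rightarrow> 'v set set \<Rightarrow> ('v \<Rightarrow> nat) \<Rightarrow> ('v set \<Rightarrow> nat) \<Rightarrow> ('v \<Rightarrow> real) \<Rightarrow> ('v set \<Rightarrow> real) \<Rightarrow> real" where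
  "vc_cut_size V E uv ue Cv Ce = (\<Sum>v\<in>V. real (uv v) * Cv v) + (\<Sum>e\<in>E. real (ue e) * Ce e)"

definition vc_spars ::
  "nat \<Rightarrow> nat \<Rightarrow> 'v set \<Rightarrow> 'v set set \<Rightarrow> ('v \<Rightarrow> nat) \<Rightarrow> ('v set \<Rightarrow> nat) \<Rightarrow> ('v \<Rightarrow> nat) \<Rightarrow> ('v set \<Rightarrow> nat)
   \<Rightarrow> ('v \<Rightarrow> real) \<Rightarrow> ('v set \<Rightarrow> real) \<Rightarrow> ('v \<Rightarrow> real) \<Rightarrow> ereal" where
  "vc_spars h s V E lv le uv ue Cv Ce A =
     (let dist0 = vc_dist V E (\<lambda>v. real (lv v)) (\<lambda>e. real (le e));
          distC = vc_dist V E (\<lambda>v. real (lv v) + real (h * s) * Cv v) (\<lambda>e. real (le e) + real (h * s) * Ce e)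
      in INF D \<in> {D. demand_ok V dist0 A h D}.
           spars_val (vc_cut_size V E uv ue Cv Ce) (sep V distC (h * s) D))"

datatype tag = In | Mid | Out

definition ec_vertices :: "'v set \<Rightarrow> ('v \<times> tag) set" where
  "ec_vertices V = V \<times> UNIV"

definition ec_arcs :: "'v set \<Rightarrow> 'v set set \<Rightarrow> (('v \<times> tag) \<times> ('v \<times> tag)) set" where
  "ec_arcs V E =
     {((v, In), (v, Mid)) | v. v \<in> V} \<union> {((v, Mid), (v, Out)) | v. v \<in> V} \<union>
     {((v, In), (v, Out)) | v. v \<in> V} \<union>
     {((a, Out), (b, In)) | a b. {a, b} \<in> E \<and> a \<noteq> b}"

text \<open>Length (resp. capacity) of an arc: internal arcs of v get the value of v,
  the arcs of an edge {a,b} get the value of that edge.\<close>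
definition ec_weight :: "('v \<Rightarrow> 'a) \<Rightarrow> ('v set \<Rightarrow> 'a) \<Rightarrow> ('v \<times> tag) \<times> ('v \<times> tag) \<Rightarrow> 'a" where
  "ec_weight fv fe x = (if fst (fst x) = fst (snd x) then fv (fst (fst x)) else fe {fst (fst x), fst (snd x)})"

definition ec_A :: "('v \<Rightarrow> real) \<Rightarrow> 'v \<times> tag \<Rightarrow> real" where
  "ec_A A x = (if snd x = Mid then A (fst x) else 0)"

definition di_path :: "'w set \<Rightarrow> ('w \<times> 'w) set \<Rightarrow> 'w list \<Rightarrow> bool" where
  "di_path W F p \<longleftrightarrow> p \<noteq> [] \<and> distinct p \<and> set p \<subseteq> W \<and>
     (\<forall>i. i + 1 < length p \<longrightarrow> (p ! i, p ! (i + 1)) \<in> F)"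

definition di_len :: "('w \<times> 'w \<Rightarrow> real) \<Rightarrow> 'w list \<Rightarrow> real" where
  "di_len len p = (\<Sum>i<length p - 1. len (p ! i, p ! (i + 1)))"

definition di_dist :: "'w set \<Rightarrow> ('w \<times> 'w) set \<Rightarrow> ('w \<times> 'w \<Rightarrow> real) \<Rightarrow> 'w \<Rightarrow> 'w \<Rightarrow> ereal" where
  "di_dist W F len v w = (INF p \<in> {p. di_path W F p \<and> hd p = v \<and> last p = w}. ereal (di_len len p))"

definition ec_cut :: "nat \<Rightarrow> 'v set \<Rightarrow> 'v set set \<Rightarrow> (('v \<times> tag) \<times> ('v \<times> tag) \<Rightarrow> real) \<Rightarrow> bool" where
  "ec_cut H V E C \<longleftrightarrow> (\<forall>x\<in>ec_arcs V E. cut_val H (C x))"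

definition ec_cut_size ::
  "'v set \<Rightarrow> 'v set set \<Rightarrow> ('v \<Rightarrow> nat) \<Rightarrow> ('v set \<Rightarrow> nat) \<Rightarrow> (('v \<times> tag) \<times> ('v \<times> tag) \<Rightarrow> real) \<Rightarrow> real" where
  "ec_cut_size V E uv ue C = (\<Sum>x\<in>ec_arcs V E. real (ec_weight uv ue x) * C x)"

definition ec_spars ::
  "nat \<Rightarrow> nat \<Rightarrow> 'v set \<Rightarrow> 'v set set \<Rightarrow> ('v \<Rightarrow> nat) \<Rightarrow> ('v set \<Rightarrow> nat) \<Rightarrow> ('v \<Rightarrow> nat) \<Rightarrow> ('v set \<Rightarrow> nat)
   \<Rightarrow> (('v \<times> tag) \<times> ('v \<times> tag) \<Rightarrow> real) \<Rightarrow> ('v \<Rightarrow> real) \<Rightarrow> ereal" where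
  "ec_spars h s V E lv le uv ue C A =
     (let W = ec_vertices V; F = ec_arcs V E;
          dist0 = di_dist W F (\<lambda>x. real (ec_weight lv le x));
          distC = di_dist W F (\<lambda>x. real (ec_weight lv le x) + real (h * s) * C x)
      in INF D \<in> {D. demand_ok W dist0 (ec_A A) h D \<and> symmetric_demand D}.
           spars_val (ec_cut_size V E uv ue C) (sep W distC (h * s) D))"

end

theory Submission
  imports Defs
begin


lemma tag_UNIV: "(UNIV :: tag set) = {In, Mid, Out}"
  using tag.exhaust by auto

lemma finite_ecv: "finite V \<Longrightarrow> finite (ec_vertices V)"
  unfolding ec_vertices_def by (simp add: tag_UNIV)

lemma all_idx_cons2:
  "(\<forall>i. i + 1 < length (a # b # ps) \<longrightarrow> R ((a # b # ps) ! i) ((a # b # ps) ! (i + 1))) \<longleftrightarrow>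
   R a b \<and> (\<forall>i. i + 1 < length (b # ps) \<longrightarrow> R ((b # ps) ! i) ((b # ps) ! (i + 1)))"
proof safe
  assume H: "\<forall>i. i + 1 < length (a # b # ps) \<longrightarrow> R ((a # b # ps) ! i) ((a # b # ps) ! (i + 1))"
  show "R a b" using H[rule_format, of 0] by simp
  fix i assume "i + 1 < length (b # ps)"
  then show "R ((b # ps) ! i) ((b # ps) ! (i + 1))" using H[rule_format, of "Suc i"] by simp
next
  fix i assume H1: "R a b" and H2: "\<forall>i. i + 1 < length (b # ps) \<longrightarrow> R ((b # ps) ! i) ((b # ps) ! (i + 1))"
    and i: "i + 1 < length (a # b # ps)"
  show "R ((a # b # ps) ! i) ((a # b # ps) ! (i + 1))"
  proof (cases i)
    case 0 then show ?thesis using H1 by simp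
  next
    case (Suc j) then show ?thesis using H2[rule_format, of j] i by simp
  qed
qed

lemma di_path_single: "di_path W F [a] \<longleftrightarrow> a \<in> W"
  by (auto simp: di_path_def)

lemma di_path_cons2: "di_path W F (a # b # ps) \<longleftrightarrow>
   a \<in> W \<and> (a, b) \<in> F \<and> a \<notin> set (b # ps) \<and> di_path W F (b # ps)"
  using all_idx_cons2[where R="\<lambda>x y. (x, y) \<in> F" and a=a and b=b and ps=ps]
  unfolding di_path_def by auto

lemma vc_path_single: "vc_path V E [a] \<longleftrightarrow> a \<in> V"
  by (auto simp: vc_path_def)

lemma vc_path_cons2: "vc_path V E (a # b # ps) \<longleftrightarrow>
   a \<in> V \<and> {a, b} \<in> E \<and> a \<notin> set (b # ps) \<and> vc_path V E (b # ps)"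
  using all_idx_cons2[where R="\<lambda>x y. {x, y} \<in> E" and a=a and b=b and ps=ps]
  unfolding vc_path_def by auto

lemma di_len_single: "di_len len [a] = 0"
  by (simp add: di_len_def)

lemma di_len_cons2: "di_len len (a # b # ps) = len (a, b) + di_len len (b # ps)"
  unfolding di_len_def by (simp del: sum.lessThan_Suc add: sum.lessThan_Suc_shift)

lemma vc_len_single: "vc_len lv le [a] = lv a"
  by (simp add: vc_len_def)

lemma vc_len_cons2: "vc_len lv le (a # b # ps) = lv a + le {a, b} + vc_len lv le (b # ps)"
  unfolding vc_len_def by (simp del: sum.lessThan_Suc add: sum.lessThan_Suc_shift)

lemma di_len_nonneg:
  assumes "di_path W F q" "\<forall>x\<in>F. 0 \<le> len x"
  shows "0 \<le> di_len len q"
  using assms unfolding di_path_def di_len_def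
  by (intro sum_nonneg) auto



lemma arc_Mid: "((x, Mid), z) \<in> ec_arcs V E \<Longrightarrow> z = (x, Out)"
  by (auto simp: ec_arcs_def)
lemma arc_In: "((x, In), z) \<in> ec_arcs V E \<Longrightarrow> z = (x, Mid) \<or> z = (x, Out)"
  by (auto simp: ec_arcs_def)
lemma arc_Out: "((x, Out), z) \<in> ec_arcs V E \<Longrightarrow> \<exists>y. z = (y, In) \<and> {x, y} \<in> E \<and> x \<noteq> y"
  by (auto simp: ec_arcs_def)
lemma arc_mem:
  "x \<in> V \<Longrightarrow> ((x, In), (x, Mid)) \<in> ec_arcs V E"
  "x \<in> V \<Longrightarrow> ((x, Mid), (x, Out)) \<in> ec_arcs V E"
  "x \<in> V \<Longrightarrow> ((x, In), (x, Out)) \<in> ec_arcs V E"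
  "{x, y} \<in> E \<Longrightarrow> x \<noteq> y \<Longrightarrow> ((x, Out), (y, In)) \<in> ec_arcs V E"
  by (auto simp: ec_arcs_def)

lemma ecv_mem[simp]: "(x, t) \<in> ec_vertices V \<longleftrightarrow> x \<in> V"
  by (simp add: ec_vertices_def)

fun ecp :: "'v list \<Rightarrow> ('v \<times> tag) list" where
  "ecp [] = []"
| "ecp [x] = [(x, In), (x, Mid)]"
| "ecp (x # y # ps) = (x, In) # (x, Out) # ecp (y # ps)"

lemma ecp_ne: "ecp (y # ps) \<noteq> []"
  by (cases ps) auto

lemma ecp_hd: "hd (ecp (y # ps)) = (y, In)"
  by (cases ps) auto

lemma ecp_props:
  assumes "vc_path V E p"
    and hA1: "\<forall>a\<in>V. len ((a, In), (a, Mid)) \<le> Lv a"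
    and hA3: "\<forall>a\<in>V. len ((a, In), (a, Out)) \<le> Lv a"
    and hA4: "\<forall>a b. {a, b} \<in> E \<longrightarrow> a \<noteq> b \<longrightarrow> len ((a, Out), (b, In)) \<le> Le {a, b}"
  shows "di_path (ec_vertices V) (ec_arcs V E) (ecp p) \<and> hd (ecp p) = (hd p, In)
    \<and> last (ecp p) = (last p, Mid) \<and> fst ` set (ecp p) \<subseteq> set p
    \<and> di_len len (ecp p) \<le> vc_len Lv Le p"
  using assms(1)
proof (induction p rule: ecp.induct)
  case 1
  then show ?case by (simp add: vc_path_def)
next
  case (2 x)
  then have x: "x \<in> V" by (simp add: vc_path_single)
  show ?case using x hA1 arc_mem(1)[OF x, of E]
    by (simp add: di_path_cons2 di_path_single di_len_cons2 di_len_single vc_len_single)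
next
  case (3 x y ps)
  from "3.prems" have x: "x \<in> V" and xy: "{x, y} \<in> E" and xn: "x \<notin> set (y # ps)"
    and py: "vc_path V E (y # ps)" by (auto simp: vc_path_cons2)
  have neq: "x \<noteq> y" using xn by auto
  note IH = "3.IH"[OF py]
  obtain r where r: "ecp (y # ps) = (y, In) # r"
    using ecp_ne[of y ps] ecp_hd[of y ps] by (cases "ecp (y # ps)") auto
  have nin1: "(x, In) \<notin> set (ecp (y # ps))" and nin2: "(x, Out) \<notin> set (ecp (y # ps))"
    using IH xn by force+
  have dp: "di_path (ec_vertices V) (ec_arcs V E) ((y, In) # r)" using IH r by simp
  have "di_path (ec_vertices V) (ec_arcs V E) ((x, In) # (x, Out) # (y, In) # r)"
    using x dp nin1 nin2 r arc_mem(3)[OF x, of E] arc_mem(4)[OF xy neq, of V]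
    by (simp add: di_path_cons2)
  moreover have "di_len len ((x, In) # (x, Out) # (y, In) # r) \<le> vc_len Lv Le (x # y # ps)"
  proof -
    have "di_len len ((x, In) # (x, Out) # (y, In) # r) =
        len ((x, In), (x, Out)) + len ((x, Out), (y, In)) + di_len len (ecp (y # ps))"
      using r by (simp add: di_len_cons2)
    also have "\<dots> \<le> Lv x + Le {x, y} + vc_len Lv Le (y # ps)"
      using hA3 x hA4 xy neq IH by (meson add_mono)
    finally show ?thesis by (simp add: vc_len_cons2)
  qed
  ultimately show ?case using IH r by auto
qed

lemma ec_le_vc_dist:
  assumes v: "v \<in> V"
    and hA1: "\<forall>a\<in>V. len ((a, In), (a, Mid)) \<le> Lv a"
    and hA2: "\<forall>a\<in>V. len ((a, Mid), (a, Out)) \<le> Lv a"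
    and hA3: "\<forall>a\<in>V. len ((a, In), (a, Out)) \<le> Lv a"
    and hA4: "\<forall>a b. {a, b} \<in> E \<longrightarrow> a \<noteq> b \<longrightarrow> len ((a, Out), (b, In)) \<le> Le {a, b}"
  shows "di_dist (ec_vertices V) (ec_arcs V E) len (v, Mid) (w, Mid) \<le> vc_dist V E Lv Le v w"
proof (cases "v = w")
  case True
  have "di_path (ec_vertices V) (ec_arcs V E) [(v, Mid)]" using v by (simp add: di_path_single)
  then have "di_dist (ec_vertices V) (ec_arcs V E) len (v, Mid) (w, Mid) \<le> ereal (di_len len [(v, Mid)])"
    unfolding di_dist_def using True by (intro INF_lower) auto
  then show ?thesis using True by (simp add: vc_dist_def di_len_single zero_ereal_def)
next
  case False
  show ?thesis unfolding vc_dist_def using False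
  proof (simp, intro INF_greatest, clarify)
    fix p assume p: "vc_path V E p" and hp: "v = hd p" and lp: "w = last p"
    obtain p' where pp: "p = v # p'" using p hp by (cases p) (auto simp: vc_path_def)
    have "p' \<noteq> []" using pp lp False by auto
    then obtain y ps where p': "p' = y # ps" by (cases p') auto
    from p pp p' have vy: "{v, y} \<in> E" and vn: "v \<notin> set (y # ps)"
      and py: "vc_path V E (y # ps)" by (auto simp: vc_path_cons2)
    have neq: "v \<noteq> y" using vn by auto
    note EP = ecp_props[OF py hA1 hA3 hA4]
    obtain r where r: "ecp (y # ps) = (y, In) # r"
      using ecp_ne[of y ps] ecp_hd[of y ps] by (cases "ecp (y # ps)") auto
    have nin1: "(v, Mid) \<notin> set (ecp (y # ps))" and nin2: "(v, Out) \<notin> set (ecp (y # ps))"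
      using EP vn by force+
    define q where "q = (v, Mid) # (v, Out) # (y, In) # r"
    have dp: "di_path (ec_vertices V) (ec_arcs V E) ((y, In) # r)" using EP r by simp
    have "di_path (ec_vertices V) (ec_arcs V E) q"
      unfolding q_def
      using v dp nin1 nin2 r arc_mem(2)[OF v, of E] arc_mem(4)[OF vy neq, of V]
      by (simp add: di_path_cons2)
    moreover have "hd q = (v, Mid)" by (simp add: q_def)
    moreover have "last q = (w, Mid)"
      using EP r lp pp p' by (simp add: q_def)
    ultimately have "di_dist (ec_vertices V) (ec_arcs V E) len (v, Mid) (w, Mid) \<le> ereal (di_len len q)"
      unfolding di_dist_def by (intro INF_lower) auto
    also have "di_len len q \<le> vc_len Lv Le p"
    proof -
      have "di_len len q = len ((v, Mid), (v, Out)) + len ((v, Out), (y, In)) + di_len len (ecp (y # ps))"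
        using r by (simp add: q_def di_len_cons2)
      also have "\<dots> \<le> Lv v + Le {v, y} + vc_len Lv Le (y # ps)"
        using hA2 v hA4 vy neq EP by (meson add_mono)
      finally show ?thesis by (simp add: vc_len_cons2 pp p')
    qed
    finally show "di_dist (ec_vertices V) (ec_arcs V E) len (hd p, Mid) (last p, Mid) \<le> ereal (vc_len Lv Le p)"
      using hp lp by simp
  qed
qed



lemma di_path_suffix: "di_path W F (xs @ ys) \<Longrightarrow> ys \<noteq> [] \<Longrightarrow> di_path W F ys"
proof (induction xs)
  case Nil then show ?case by simp
next
  case (Cons a xs)
  obtain b rest where "xs @ ys = b # rest" using Cons.prems(2) by (cases "xs @ ys") auto
  then show ?case using Cons by (simp add: di_path_cons2)
qed

lemma di_path_arc: "di_path W F (xs @ a # b # ys) \<Longrightarrow> (a, b) \<in> F"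
  using di_path_suffix[of W F xs "a # b # ys"] by (simp add: di_path_cons2)

lemma ec_to_vc_claim:
  assumes "di_path (ec_vertices V) (ec_arcs V E) q" "hd q = (x, In)" "last q = (w, Mid)"
    and hB0: "\<forall>a\<in>V. 0 \<le> Lv a"
    and hB1: "\<forall>a\<in>V. Lv a \<le> len ((a, In), (a, Mid))"
    and hB2: "\<forall>a\<in>V. Lv a \<le> len ((a, Mid), (a, Out))"
    and hB3: "\<forall>a\<in>V. Lv a \<le> len ((a, In), (a, Out))"
    and hB4: "\<forall>a b. {a, b} \<in> E \<longrightarrow> a \<noteq> b \<longrightarrow> Le {a, b} \<le> len ((a, Out), (b, In))"
  shows "\<exists>p. vc_path V E p \<and> hd p = x \<and> last p = w
     \<and> set p \<subseteq> {a. (a, In) \<in> set q \<and> ((a, Mid) \<in> set q \<or> (a, Out) \<in> set q)}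
     \<and> vc_len Lv Le p \<le> di_len len q"
  using assms(1-3)
proof (induction "length q" arbitrary: q x rule: less_induct)
  case less
  have W: "\<And>a t. (a, t) \<in> set q \<Longrightarrow> a \<in> V"
    using less.prems(1) by (auto simp: di_path_def)
  have dq: "distinct q" using less.prems(1) by (simp add: di_path_def)
  obtain r where q: "q = (x, In) # r" using less.prems
    by (cases q) (auto simp: di_path_def)
  have x: "x \<in> V" using W q by auto
  have cont: "\<exists>p. vc_path V E p \<and> hd p = x \<and> last p = w
     \<and> set p \<subseteq> {a. (a, In) \<in> set q \<and> ((a, Mid) \<in> set q \<or> (a, Out) \<in> set q)}
     \<and> vc_len Lv Le p \<le> c + len ((x, Out), (y, In)) + di_len len ((y, In) # r3)"
    if qf: "q = pre @ (x, Out) # (y, In) # r3" and xo: "(x, In) \<in> set pre"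
      and c: "Lv x \<le> c"
    for pre y r3 c
  proof -
    define s where "s = (y, In) # r3"
    have dps: "di_path (ec_vertices V) (ec_arcs V E) s"
      using less.prems(1) qf di_path_suffix[of _ _ "pre @ [(x, Out)]" s] by (simp add: s_def)
    have arc: "((x, Out), (y, In)) \<in> ec_arcs V E"
      using less.prems(1) qf di_path_arc by metis
    then have xy: "{x, y} \<in> E" and neq: "x \<noteq> y" using arc_Out by fastforce+
    have ls: "last s = (w, Mid)" using less.prems(3) qf by (simp add: s_def)
    have lt: "length s < length q" using qf by (simp add: s_def)
    obtain p' where p': "vc_path V E p'" "hd p' = y" "last p' = w"
      and sp': "set p' \<subseteq> {a. (a, In) \<in> set s \<and> ((a, Mid) \<in> set s \<or> (a, Out) \<in> set s)}"
      and lp': "vc_len Lv Le p' \<le> di_len len s"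
      using less.hyps[OF lt dps _ ls] by (auto simp: s_def)
    have xns: "(x, In) \<notin> set s" using dq qf xo by (auto simp: s_def)
    have xnp: "x \<notin> set p'" using sp' xns by auto
    obtain ps where pps: "p' = y # ps" using p' by (cases p') (auto simp: vc_path_def)
    have vp: "vc_path V E (x # p')" using x xy xnp p' pps by (simp add: vc_path_cons2)
    have sq: "set s \<subseteq> set q" using qf by (auto simp: s_def)
    have "set (x # p') \<subseteq> {a. (a, In) \<in> set q \<and> ((a, Mid) \<in> set q \<or> (a, Out) \<in> set q)}"
      using sp' sq qf xo by auto
    moreover have "vc_len Lv Le (x # p') \<le> c + len ((x, Out), (y, In)) + di_len len s"
      using c hB4 xy neq lp' pps by (simp add: vc_len_cons2) (meson add_mono)
    ultimately show ?thesis using vp p' pps unfolding s_def by (intro exI[of _ "x # p'"]) auto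
  qed
  have "r \<noteq> []" using q less.prems(3) by auto
  then obtain z r' where r: "r = z # r'" by (cases r) auto
  have zc: "z = (x, Mid) \<or> z = (x, Out)"
  proof -
    have "((x, In), z) \<in> ec_arcs V E" using less.prems(1) q r by (simp add: di_path_cons2)
    then show ?thesis by (rule arc_In)
  qed
  then show ?case
  proof
    assume z: "z = (x, Mid)"
    show ?thesis
    proof (cases r')
      case Nil
      then have "w = x" using less.prems(3) q r z by simp
      moreover have "vc_len Lv Le [x] \<le> di_len len q"
        using q r z Nil hB1 x by (simp add: vc_len_single di_len_cons2 di_len_single)
      ultimately show ?thesis using x q r z
        by (intro exI[of _ "[x]"]) (auto simp: vc_path_single)
    next
      case (Cons z2 r'')
      have z2: "z2 = (x, Out)"
        using less.prems(1) q r z Cons by (auto simp: di_path_cons2 dest: arc_Mid)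
      have "r'' \<noteq> []" using q r z Cons z2 less.prems(3) by auto
      then obtain z3 r3 where r'': "r'' = z3 # r3" by (cases r'') auto
      obtain y where y: "z3 = (y, In)"
        using less.prems(1) q r z Cons z2 r'' by (auto simp: di_path_cons2 dest!: arc_Out)
      have "\<exists>p. vc_path V E p \<and> hd p = x \<and> last p = w
     \<and> set p \<subseteq> {a. (a, In) \<in> set q \<and> ((a, Mid) \<in> set q \<or> (a, Out) \<in> set q)}
     \<and> vc_len Lv Le p \<le> (len ((x, In), (x, Mid)) + len ((x, Mid), (x, Out))) + len ((x, Out), (y, In)) + di_len len ((y, In) # r3)"
        apply (rule cont[of "[(x, In), (x, Mid)]"])
        using q r z Cons z2 r'' y apply simp
         apply simp
        using hB1 hB2 hB0 x by force
      then show ?thesis using q r z Cons z2 r'' y by (simp add: di_len_cons2 add.assoc)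
    qed
  next
    assume z: "z = (x, Out)"
    have "r' \<noteq> []" using q r z less.prems(3) by auto
    then obtain z3 r3 where r': "r' = z3 # r3" by (cases r') auto
    obtain y where y: "z3 = (y, In)"
      using less.prems(1) q r z r' by (auto simp: di_path_cons2 dest!: arc_Out)
    have "\<exists>p. vc_path V E p \<and> hd p = x \<and> last p = w
     \<and> set p \<subseteq> {a. (a, In) \<in> set q \<and> ((a, Mid) \<in> set q \<or> (a, Out) \<in> set q)}
     \<and> vc_len Lv Le p \<le> len ((x, In), (x, Out)) + len ((x, Out), (y, In)) + di_len len ((y, In) # r3)"
      apply (rule cont[of "[(x, In)]"])
      using q r z r' y apply simp
       apply simp
      using hB3 x by force
    then show ?thesis using q r z r' y by (simp add: di_len_cons2 add.assoc)
  qed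
qed


lemma vc_le_ec_dist:
  assumes vw: "v \<noteq> w"
    and hB0: "\<forall>a\<in>V. 0 \<le> Lv a"
    and hB1: "\<forall>a\<in>V. Lv a \<le> len ((a, In), (a, Mid))"
    and hB2: "\<forall>a\<in>V. Lv a \<le> len ((a, Mid), (a, Out))"
    and hB3: "\<forall>a\<in>V. Lv a \<le> len ((a, In), (a, Out))"
    and hB4: "\<forall>a b. {a, b} \<in> E \<longrightarrow> a \<noteq> b \<longrightarrow> Le {a, b} \<le> len ((a, Out), (b, In))"
  shows "vc_dist V E Lv Le v w \<le> di_dist (ec_vertices V) (ec_arcs V E) len (v, Mid) (w, Mid)"
  unfolding di_dist_def
proof (intro INF_greatest, clarify)
  fix q assume dq: "di_path (ec_vertices V) (ec_arcs V E) q" and hq: "hd q = (v, Mid)"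
    and lq: "last q = (w, Mid)"
  obtain r where q: "q = (v, Mid) # r" using dq hq by (cases q) (auto simp: di_path_def)
  have "r \<noteq> []" using q lq vw by auto
  then obtain z r' where r: "r = z # r'" by (cases r) auto
  have z: "z = (v, Out)" using dq q r by (auto simp: di_path_cons2 dest: arc_Mid)
  have "r' \<noteq> []" using q r z lq by auto
  then obtain z3 r3 where r': "r' = z3 # r3" by (cases r') auto
  obtain y where y: "z3 = (y, In)" and vy: "{v, y} \<in> E" and neq: "v \<noteq> y"
    using dq q r z r' by (auto simp: di_path_cons2 dest!: arc_Out)
  define s where "s = (y, In) # r3"
  have v: "v \<in> V" using dq q by (simp add: di_path_def)
  have ds: "di_path (ec_vertices V) (ec_arcs V E) s" using dq q r z r' y
    by (simp add: di_path_cons2 s_def)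
  obtain p' where p': "vc_path V E p'" "hd p' = y" "last p' = w"
      and sp': "set p' \<subseteq> {a. (a, In) \<in> set s \<and> ((a, Mid) \<in> set s \<or> (a, Out) \<in> set s)}"
      and lp': "vc_len Lv Le p' \<le> di_len len s"
    using ec_to_vc_claim[OF ds _ _ hB0 hB1 hB2 hB3 hB4, of y w] lq q r z r' y
    by (auto simp: s_def)
  have dist: "distinct q" using dq by (simp add: di_path_def)
  have "(v, Mid) \<notin> set s" "(v, Out) \<notin> set s" using dist q r z r' y by (auto simp: s_def)
  then have vnp: "v \<notin> set p'" using sp' by auto
  obtain ps where pps: "p' = y # ps" using p' by (cases p') (auto simp: vc_path_def)
  have vp: "vc_path V E (v # p')" using v vy vnp p' pps by (simp add: vc_path_cons2)
  have mem: "v # p' \<in> {p. vc_path V E p \<and> hd p = v \<and> last p = w}" using vp p' pps by auto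
  have "vc_dist V E Lv Le v w \<le> ereal (vc_len Lv Le (v # p'))"
    unfolding vc_dist_def using vw INF_lower[OF mem] by simp
  also have "vc_len Lv Le (v # p') \<le> di_len len q"
  proof -
    have "vc_len Lv Le (v # p') = Lv v + Le {v, y} + vc_len Lv Le p'" using pps by (simp add: vc_len_cons2)
    also have "\<dots> \<le> len ((v, Mid), (v, Out)) + len ((v, Out), (y, In)) + di_len len s"
      using hB2 v hB4 vy neq lp' by (meson add_mono)
    also have "\<dots> = di_len len q" using q r z r' y by (simp add: di_len_cons2 s_def)
    finally show ?thesis .
  qed
  finally show "vc_dist V E Lv Le v w \<le> ereal (di_len len q)" by simp
qed

lemma vc_dist_refl: "vc_dist V E Lv Le v v = 0"
  by (simp add: vc_dist_def)

lemma vc_path_rev: "vc_path V E p \<Longrightarrow> vc_path V E (rev p)"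
  unfolding vc_path_def
proof (intro conjI allI impI; (elim conjE)?)
  fix i assume H: "\<forall>i. i + 1 < length p \<longrightarrow> {p ! i, p ! (i + 1)} \<in> E"
    and i: "i + 1 < length (rev p)"
  have "{p ! (length p - Suc (i + 1)), p ! (length p - Suc (i + 1) + 1)} \<in> E"
    using H i by simp
  moreover have "length p - Suc (i + 1) + 1 = length p - Suc i" using i by simp
  ultimately show "{rev p ! i, rev p ! (i + 1)} \<in> E"
    using i by (simp add: rev_nth insert_commute)
qed auto

lemma vc_len_rev: "vc_len Lv Le (rev p) = vc_len Lv Le p"
proof -
  let ?n = "length p"
  have A: "(\<Sum>i<?n. Lv (rev p ! i)) = (\<Sum>i<?n. Lv (p ! i))"
  proof -
    have "(\<Sum>i<?n. Lv (rev p ! i)) = (\<Sum>i<?n. Lv (p ! (?n - Suc i)))"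
      by (intro sum.cong) (auto simp: rev_nth)
    also have "\<dots> = (\<Sum>i<?n. Lv (p ! i))" by (rule sum.nat_diff_reindex)
    finally show ?thesis .
  qed
  let ?m = "?n - 1"
  have B: "(\<Sum>i<?m. Le {rev p ! i, rev p ! (i + 1)}) = (\<Sum>i<?m. Le {p ! i, p ! (i + 1)})"
  proof -
    have "(\<Sum>i<?m. Le {rev p ! i, rev p ! (i + 1)}) = (\<Sum>i<?m. (\<lambda>j. Le {p ! j, p ! (j + 1)}) (?m - Suc i))"
    proof (intro sum.cong refl)
      fix i assume "i \<in> {..<?m}"
      then have i: "i < ?m" by simp
      have ar: "?m - Suc i + 1 = ?n - Suc i" using i by arith
      have e1: "rev p ! i = p ! (?m - Suc i + 1)" using i by (simp only: ar) (simp add: rev_nth)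
      have e2: "rev p ! (i + 1) = p ! (?m - Suc i)" using i by (simp add: rev_nth)
      show "Le {rev p ! i, rev p ! (i + 1)} = (\<lambda>j. Le {p ! j, p ! (j + 1)}) (?m - Suc i)"
        using e1 e2 by (simp add: insert_commute)
    qed
    also have "\<dots> = (\<Sum>i<?m. Le {p ! i, p ! (i + 1)})" by (rule sum.nat_diff_reindex)
    finally show ?thesis .
  qed
  show ?thesis unfolding vc_len_def using A B by simp
qed

lemma vc_dist_sym: "vc_dist V E Lv Le v w = vc_dist V E Lv Le w v"
proof -
  have *: "vc_dist V E Lv Le v w \<le> vc_dist V E Lv Le w v" for v w
  proof (cases "v = w")
    case True then show ?thesis by simp
  next
    case False
    have e: "vc_dist V E Lv Le a b = (INF p \<in> {p. vc_path V E p \<and> hd p = a \<and> last p = b}. ereal (vc_len Lv Le p))"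
      if "a \<noteq> b" for a b using that by (simp add: vc_dist_def)
    show ?thesis unfolding e[OF False] e[OF False[symmetric]]
    proof (rule INF_greatest)
      fix p assume "p \<in> {p. vc_path V E p \<and> hd p = w \<and> last p = v}"
      then have "vc_path V E (rev p)" "hd (rev p) = v" "last (rev p) = w"
        by (auto simp: vc_path_rev hd_rev last_rev)
      then have "(INF p \<in> {p. vc_path V E p \<and> hd p = v \<and> last p = w}. ereal (vc_len Lv Le p)) \<le> ereal (vc_len Lv Le (rev p))"
        by (intro INF_lower) auto
      then show "(INF p \<in> {p. vc_path V E p \<and> hd p = v \<and> last p = w}. ereal (vc_len Lv Le p)) \<le> ereal (vc_len Lv Le p)"
        by (simp add: vc_len_rev)
    qed
  qed
  show ?thesis using *[of v w] *[of w v] by simp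
qed



definition ecQ :: "'v set \<Rightarrow> (('v \<times> tag) \<times> ('v \<times> tag)) set" where
  "ecQ e = {((a, Out), (b, In)) | a b. {a, b} = e \<and> a \<noteq> b}"

definition ecI :: "'v \<Rightarrow> (('v \<times> tag) \<times> ('v \<times> tag)) set" where
  "ecI v = {((v, In), (v, Mid)), ((v, Mid), (v, Out)), ((v, In), (v, Out))}"

lemma ecQ_pair: "a \<noteq> b \<Longrightarrow> ecQ {a, b} = {((a, Out), (b, In)), ((b, Out), (a, In))}"
  unfolding ecQ_def by (auto simp: doubleton_eq_iff)

lemma ec_arcs_split: "ec_arcs V E = (\<Union>v\<in>V. ecI v) \<union> (\<Union>e\<in>E. ecQ e)"
  unfolding ec_arcs_def ecI_def ecQ_def by blast

lemma ec_cut_size_decomp: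
  assumes fV: "finite V" and gE: "\<forall>e\<in>E. \<exists>a b. a \<in> V \<and> b \<in> V \<and> a \<noteq> b \<and> e = {a, b}"
  shows "ec_cut_size V E uv ue C =
    (\<Sum>v\<in>V. real (uv v) * (C ((v, In), (v, Mid)) + C ((v, Mid), (v, Out)) + C ((v, In), (v, Out))))
    + (\<Sum>e\<in>E. real (ue e) * (\<Sum>x\<in>ecQ e. C x))"
proof -
  define f where "f x = real (ec_weight uv ue x) * C x" for x
  have fE: "finite E"
  proof (rule finite_subset[of E "Pow V"])
    show "E \<subseteq> Pow V" using gE by auto
  qed (use fV in simp)
  have fI: "finite (ecI v)" for v by (simp add: ecI_def)
  have fQ: "finite (ecQ e)" if "e \<in> E" for e
    using gE that by (auto simp: ecQ_pair)
  have d1: "(\<Union>v\<in>V. ecI v) \<inter> (\<Union>e\<in>E. ecQ e) = {}"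
    unfolding ecI_def ecQ_def by auto
  have dI: "\<forall>i\<in>V. \<forall>j\<in>V. i \<noteq> j \<longrightarrow> ecI i \<inter> ecI j = {}"
    unfolding ecI_def by auto
  have dQ: "\<forall>i\<in>E. \<forall>j\<in>E. i \<noteq> j \<longrightarrow> ecQ i \<inter> ecQ j = {}"
    unfolding ecQ_def by auto
  have "ec_cut_size V E uv ue C = sum f ((\<Union>v\<in>V. ecI v) \<union> (\<Union>e\<in>E. ecQ e))"
    unfolding ec_cut_size_def f_def ec_arcs_split ..
  also have "\<dots> = sum f (\<Union>v\<in>V. ecI v) + sum f (\<Union>e\<in>E. ecQ e)"
    using fV fE fI fQ d1 by (intro sum.union_disjoint) auto
  also have "sum f (\<Union>v\<in>V. ecI v) = (\<Sum>v\<in>V. sum f (ecI v))"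
    using fV fI dI by (intro sum.UNION_disjoint) auto
  also have "sum f (\<Union>e\<in>E. ecQ e) = (\<Sum>e\<in>E. sum f (ecQ e))"
    using fE fQ dQ by (intro sum.UNION_disjoint) auto
  also have "(\<Sum>v\<in>V. sum f (ecI v)) =
    (\<Sum>v\<in>V. real (uv v) * (C ((v, In), (v, Mid)) + C ((v, Mid), (v, Out)) + C ((v, In), (v, Out))))"
    by (intro sum.cong refl) (simp add: ecI_def f_def ec_weight_def algebra_simps)
  also have "(\<Sum>e\<in>E. sum f (ecQ e)) = (\<Sum>e\<in>E. real (ue e) * (\<Sum>x\<in>ecQ e. C x))"
  proof (intro sum.cong refl)
    fix e assume "e \<in> E"
    then obtain a b where ab: "a \<noteq> b" "e = {a, b}" using gE by auto
    show "sum f (ecQ e) = real (ue e) * (\<Sum>x\<in>ecQ e. C x)"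
      using ab by (simp add: ecQ_pair f_def ec_weight_def insert_commute algebra_simps)
  qed
  finally show ?thesis .
qed

lemma sum_W_Mid:
  assumes "finite V" "\<forall>y. snd y \<noteq> Mid \<longrightarrow> F y = 0"
  shows "(\<Sum>y\<in>ec_vertices V. F y) = (\<Sum>w\<in>V. F (w, Mid))"
proof -
  have "(\<Sum>y\<in>ec_vertices V. F y) = (\<Sum>w\<in>V. \<Sum>t\<in>{In, Mid, Out}. F (w, t))"
    unfolding ec_vertices_def tag_UNIV
    by (subst sum.cartesian_product) (simp add: split_def)
  also have "\<dots> = (\<Sum>w\<in>V. F (w, Mid))"
    using assms(2) by (intro sum.cong refl) simp
  finally show ?thesis .
qed

lemma sum_WW_Mid:
  assumes fV: "finite V" and z: "\<forall>x y. snd x \<noteq> Mid \<or> snd y \<noteq> Mid \<longrightarrow> G (x, y) = 0"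
  shows "(\<Sum>p\<in>ec_vertices V \<times> ec_vertices V. G p) = (\<Sum>p\<in>V \<times> V. G ((fst p, Mid), (snd p, Mid)))"
proof -
  have "(\<Sum>p\<in>ec_vertices V \<times> ec_vertices V. G p) = (\<Sum>x\<in>ec_vertices V. \<Sum>y\<in>ec_vertices V. G (x, y))"
    by (simp add: sum.cartesian_product)
  also have "\<dots> = (\<Sum>x\<in>ec_vertices V. \<Sum>w\<in>V. G (x, (w, Mid)))"
    using z fV by (intro sum.cong refl sum_W_Mid) auto
  also have "\<dots> = (\<Sum>v\<in>V. \<Sum>w\<in>V. G ((v, Mid), (w, Mid)))"
    using z fV by (intro sum_W_Mid) (auto intro: sum.neutral)
  also have "\<dots> = (\<Sum>p\<in>V \<times> V. G ((fst p, Mid), (snd p, Mid)))"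
    by (subst sum.cartesian_product) (simp add: split_def)
  finally show ?thesis .
qed

lemma sum_swap_prod: "(\<Sum>p\<in>V \<times> V. f (snd p) (fst p)) = (\<Sum>p\<in>V \<times> V. f (fst p) (snd p))"
proof -
  have "(\<Sum>p\<in>V \<times> V. f (snd p) (fst p)) = (\<Sum>x\<in>V. \<Sum>y\<in>V. f y x)"
    by (subst sum.cartesian_product) (simp add: split_def)
  also have "\<dots> = (\<Sum>y\<in>V. \<Sum>x\<in>V. f y x)" by (rule sum.swap)
  also have "\<dots> = (\<Sum>p\<in>V \<times> V. f (fst p) (snd p))"
    by (subst sum.cartesian_product) (simp add: split_def)
  finally show ?thesis .
qed



lemma cut_val_nonneg: "cut_val H c \<Longrightarrow> 0 \<le> c"
  by (simp add: cut_val_def)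

lemma sep_nonneg: "\<forall>v w. 0 \<le> D v w \<Longrightarrow> 0 \<le> sep W d h' D"
  unfolding sep_def by (intro sum_nonneg) auto

lemma spars_valD: "spars_val c sv < ereal \<phi> \<Longrightarrow> sv \<noteq> 0 \<and> c / sv < \<phi>"
  by (simp add: spars_val_def split: if_splits)

lemma part1:
  fixes V :: "'v set" and E :: "'v set set"
    and lv uv :: "'v \<Rightarrow> nat" and le ue :: "'v set \<Rightarrow> nat"
    and A :: "'v \<Rightarrow> real" and h s :: nat and \<phi> :: real
  assumes G: "vc_graph V E lv le uv ue A"
    and cut: "vc_cut (h * s) V E Cv Ce" and sp: "vc_spars h s V E lv le uv ue Cv Ce A < ereal \<phi>"
  shows "\<exists>C'. ec_cut (h * s) V E C' \<and> ec_spars h s V E lv le uv ue C' A < ereal (3 * \<phi>)"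
proof -
  define H where "H = h * s"
  have fV: "finite V" and gE: "\<forall>e\<in>E. \<exists>a b. a \<in> V \<and> b \<in> V \<and> a \<noteq> b \<and> e = {a, b}"
    using G by (auto simp: vc_graph_def)
  have Cv0: "\<forall>v\<in>V. 0 \<le> Cv v" and Ce0: "\<forall>e\<in>E. 0 \<le> Ce e"
    using cut by (auto simp: vc_cut_def cut_val_def)
  define Lv where "Lv v = real (lv v) + real H * Cv v" for v
  define Le where "Le e = real (le e) + real H * Ce e" for e
  define dist0 where "dist0 = vc_dist V E (\<lambda>v. real (lv v)) (\<lambda>e. real (le e))"
  define distC where "distC = vc_dist V E Lv Le"
  define size where "size = vc_cut_size V E uv ue Cv Ce"
  obtain D where dD: "demand_ok V dist0 A h D"
    and spD: "spars_val size (sep V distC H D) < ereal \<phi>"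
    using sp unfolding vc_spars_def Let_def INF_less_iff dist0_def distC_def size_def Lv_def Le_def H_def
    by auto
  define sepD where "sepD = sep V distC H D"
  have D0: "\<forall>v w. 0 \<le> D v w" and Dout: "\<forall>v w. (v \<notin> V \<or> w \<notin> V) \<longrightarrow> D v w = 0"
    and Dsum: "\<forall>v\<in>V. max (\<Sum>w\<in>V. D v w) (\<Sum>w\<in>V. D w v) \<le> A v"
    and Dlen: "\<forall>v w. D v w > 0 \<longrightarrow> dist0 v w \<le> ereal (real h)"
    using dD by (auto simp: demand_ok_def)
  have sepD_pos: "0 < sepD" and ratio: "size / sepD < \<phi>"
    using spars_valD[OF spD] sep_nonneg[OF D0, of V distC H] by (auto simp: sepD_def)
  have size0: "0 \<le> size"
    unfolding size_def vc_cut_size_def using Cv0 Ce0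
    by (intro add_nonneg_nonneg sum_nonneg mult_nonneg_nonneg) auto
  define C' where "C' = ec_weight Cv Ce"
  have C'cut: "ec_cut H V E C'"
    unfolding ec_cut_def
  proof
    fix x assume "x \<in> ec_arcs V E"
    then show "cut_val H (C' x)"
      using cut unfolding ec_arcs_def vc_cut_def C'_def ec_weight_def H_def
      by (auto simp: insert_commute)
  qed
  define size' where "size' = ec_cut_size V E uv ue C'"
  have size'_eq: "size' = (\<Sum>v\<in>V. real (uv v) * (3 * Cv v)) + (\<Sum>e\<in>E. real (ue e) * (2 * Ce e))"
  proof -
    have "size' = (\<Sum>v\<in>V. real (uv v) * (C' ((v, In), (v, Mid)) + C' ((v, Mid), (v, Out)) + C' ((v, In), (v, Out))))
      + (\<Sum>e\<in>E. real (ue e) * (\<Sum>x\<in>ecQ e. C' x))"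
      unfolding size'_def by (rule ec_cut_size_decomp[OF fV gE])
    also have "(\<Sum>e\<in>E. real (ue e) * (\<Sum>x\<in>ecQ e. C' x)) = (\<Sum>e\<in>E. real (ue e) * (2 * Ce e))"
    proof (intro sum.cong refl)
      fix e assume "e \<in> E"
      then obtain a b where ab: "a \<noteq> b" "e = {a, b}" using gE by auto
      show "real (ue e) * (\<Sum>x\<in>ecQ e. C' x) = real (ue e) * (2 * Ce e)"
        using ab by (simp add: ecQ_pair C'_def ec_weight_def insert_commute)
    qed
    finally show ?thesis by (simp add: C'_def ec_weight_def)
  qed
  have size'_le: "size' \<le> 3 * size"
  proof -
    have "(\<Sum>e\<in>E. real (ue e) * (2 * Ce e)) \<le> (\<Sum>e\<in>E. 3 * (real (ue e) * Ce e))"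
      using Ce0 by (intro sum_mono) (simp add: mult_left_mono)
    then show ?thesis
      unfolding size'_eq size_def vc_cut_size_def
      by (simp add: sum_distrib_left algebra_simps)
  qed
  have size'0: "0 \<le> size'"
    unfolding size'_eq using Cv0 Ce0
    by (intro add_nonneg_nonneg sum_nonneg mult_nonneg_nonneg) auto
  define W where "W = ec_vertices V"
  define F where "F = ec_arcs V E"
  define ecd0 where "ecd0 = di_dist W F (\<lambda>x. real (ec_weight lv le x))"
  define ecdC where "ecdC = di_dist W F (\<lambda>x. real (ec_weight lv le x) + real H * C' x)"
  define D' where "D' x y = (if snd x = Mid \<and> snd y = Mid then (D (fst x) (fst y) + D (fst y) (fst x)) / 2 else 0)" for x y
  have D'sym: "symmetric_demand D'" unfolding symmetric_demand_def D'_def by auto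
  have rowsum: "(\<Sum>y\<in>W. D' (v, Mid) y) = ((\<Sum>w\<in>V. D v w) + (\<Sum>w\<in>V. D w v)) / 2" for v
  proof -
    have "(\<Sum>y\<in>W. D' (v, Mid) y) = (\<Sum>w\<in>V. D' (v, Mid) (w, Mid))"
      unfolding W_def by (rule sum_W_Mid[OF fV]) (simp add: D'_def)
    also have "\<dots> = ((\<Sum>w\<in>V. D v w) + (\<Sum>w\<in>V. D w v)) / 2"
      by (simp add: D'_def sum.distrib flip: sum_divide_distrib)
    finally show ?thesis .
  qed
  have d0sym: "dist0 v w = dist0 w v" for v w unfolding dist0_def by (rule vc_dist_sym)
  have dCsym: "distC v w = distC w v" for v w unfolding distC_def by (rule vc_dist_sym)
  have ok: "demand_ok W ecd0 (ec_A A) h D'"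
    unfolding demand_ok_def
  proof (intro conjI allI impI ballI)
    fix x y show "0 \<le> D' x y" using D0 by (simp add: D'_def)
  next
    fix x y assume "x \<notin> W \<or> y \<notin> W"
    then have "fst x \<notin> V \<or> fst y \<notin> V" by (cases x; cases y) (auto simp: W_def)
    then show "D' x y = 0" using Dout by (auto simp: D'_def)
  next
    fix x assume xW: "x \<in> W"
    obtain v t where x: "x = (v, t)" by (cases x)
    have v: "v \<in> V" using xW x by (simp add: W_def)
    have col: "(\<Sum>y\<in>W. D' y x) = (\<Sum>y\<in>W. D' x y)"
      by (intro sum.cong refl) (auto simp: D'_def)
    show "max (\<Sum>y\<in>W. D' x y) (\<Sum>y\<in>W. D' y x) \<le> ec_A A x"
    proof (cases "t = Mid")
      case True
      have "(\<Sum>w\<in>V. D v w) \<le> A v" "(\<Sum>w\<in>V. D w v) \<le> A v" using Dsum v by auto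
      then have "(\<Sum>y\<in>W. D' x y) \<le> A v" using rowsum[of v] x True by simp
      then show ?thesis using col v x True by (simp add: ec_A_def)
    next
      case False
      then have "(\<Sum>y\<in>W. D' x y) = 0" using x by (simp add: D'_def)
      then show ?thesis using col False x by (simp add: ec_A_def)
    qed
  next
    fix x y assume pos: "D' x y > 0"
    obtain v t where x: "x = (v, t)" by (cases x)
    obtain w t' where y: "y = (w, t')" by (cases y)
    have tt: "t = Mid" "t' = Mid" using pos x y by (auto simp: D'_def split: if_splits)
    have "D v w > 0 \<or> D w v > 0" using pos x y tt D0
      by (auto simp: D'_def)
    then have dl: "dist0 v w \<le> ereal (real h)" and vV: "v \<in> V"
      using Dlen d0sym Dout by (metis less_irrefl)+
    have "ecd0 (v, Mid) (w, Mid) \<le> dist0 v w"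
      unfolding ecd0_def dist0_def W_def F_def
      by (rule ec_le_vc_dist[OF vV]) (auto simp: ec_weight_def)
    then show "ecd0 x y \<le> ereal (real h)" using dl x y tt by simp
  qed
  define sep' where "sep' = sep W ecdC H D'"
  have sep'_ge: "sepD \<le> sep'"
  proof -
    define g where "g a b = (if distC a b > ereal (real H) then D a b else 0)" for a b
    have sep'eq: "sep' = (\<Sum>p\<in>V \<times> V. if ecdC (fst p, Mid) (snd p, Mid) > ereal (real H)
        then (D (fst p) (snd p) + D (snd p) (fst p)) / 2 else 0)"
      unfolding sep'_def sep_def W_def
      apply (subst sum_WW_Mid[OF fV])
       apply (simp add: D'_def)
      apply (intro sum.cong refl)
      apply (simp add: D'_def)
      done
    have mono: "(\<Sum>p\<in>V \<times> V. (g (fst p) (snd p) + g (snd p) (fst p)) / 2) \<le> sep'"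
      unfolding sep'eq
    proof (intro sum_mono)
      fix p assume p: "p \<in> V \<times> V"
      obtain v w where pvw: "p = (v, w)" by (cases p)
      show "(g (fst p) (snd p) + g (snd p) (fst p)) / 2 \<le> (if ecdC (fst p, Mid) (snd p, Mid) > ereal (real H)
        then (D (fst p) (snd p) + D (snd p) (fst p)) / 2 else 0)"
      proof (cases "distC v w > ereal (real H)")
        case True
        have vw: "v \<noteq> w" using True by (auto simp: distC_def vc_dist_refl)
        have "distC v w \<le> ecdC (v, Mid) (w, Mid)"
          unfolding distC_def ecdC_def W_def F_def
          by (rule vc_le_ec_dist[OF vw]) (auto simp: Lv_def Le_def C'_def ec_weight_def Cv0 Ce0)
        then have "ecdC (v, Mid) (w, Mid) > ereal (real H)" using True by simp
        then show ?thesis using True dCsym[of v w] pvw by (simp add: g_def)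
      next
        case False
        then show ?thesis using dCsym[of v w] pvw D0 by (simp add: g_def)
      qed
    qed
    have "(\<Sum>p\<in>V \<times> V. (g (fst p) (snd p) + g (snd p) (fst p)) / 2)
        = ((\<Sum>p\<in>V \<times> V. g (fst p) (snd p)) + (\<Sum>p\<in>V \<times> V. g (snd p) (fst p))) / 2"
      by (simp add: sum.distrib flip: sum_divide_distrib)
    also have "\<dots> = sepD"
      unfolding sum_swap_prod[of g V] by (simp add: sepD_def sep_def g_def)
    finally show ?thesis using mono by simp
  qed
  have "ec_spars h s V E lv le uv ue C' A \<le> spars_val size' sep'"
    unfolding ec_spars_def Let_def
    apply (fold W_def F_def H_def)
    apply (fold ecd0_def ecdC_def size'_def sep'_def)
    unfolding sep'_def using ok D'sym by (intro INF_lower) auto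
  also have "spars_val size' sep' = ereal (size' / sep')"
    using sepD_pos sep'_ge by (simp add: spars_val_def)
  also have "size' / sep' < 3 * \<phi>"
  proof -
    have "size' / sep' \<le> size' / sepD"
      using size'0 sepD_pos sep'_ge by (intro divide_left_mono) auto
    also have "\<dots> \<le> 3 * size / sepD"
      using size'_le sepD_pos by (intro divide_right_mono) auto
    also have "\<dots> = 3 * (size / sepD)" by simp
    also have "\<dots> < 3 * \<phi>" using ratio by simp
    finally show ?thesis .
  qed
  finally show ?thesis using C'cut by (auto simp: H_def)
qed



lemma cut_val_max: "cut_val H a \<Longrightarrow> cut_val H b \<Longrightarrow> cut_val H (max a b)"
  by (simp add: max_def)

lemma part2:
  fixes V :: "'v set" and E :: "'v set set"
    and lv uv :: "'v \<Rightarrow> nat" and le ue :: "'v set \<Rightarrow> nat"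
    and A :: "'v \<Rightarrow> real" and h s :: nat and \<phi> :: real
  assumes G: "vc_graph V E lv le uv ue A"
    and cut: "ec_cut (h * s) V E C'" and sp: "ec_spars h s V E lv le uv ue C' A < ereal \<phi>"
  shows "\<exists>Cv Ce. vc_cut (h * s) V E Cv Ce \<and> vc_spars h s V E lv le uv ue Cv Ce A < ereal \<phi>"
proof -
  define H where "H = h * s"
  have fV: "finite V" and gE: "\<forall>e\<in>E. \<exists>a b. a \<in> V \<and> b \<in> V \<and> a \<noteq> b \<and> e = {a, b}"
    using G by (auto simp: vc_graph_def)
  have cutv: "\<forall>x\<in>ec_arcs V E. cut_val H (C' x)" using cut by (simp add: ec_cut_def H_def)
  have C'0: "\<forall>x\<in>ec_arcs V E. 0 \<le> C' x" using cutv by (auto simp: cut_val_def)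
  define W where "W = ec_vertices V"
  define F where "F = ec_arcs V E"
  define ecd0 where "ecd0 = di_dist W F (\<lambda>x. real (ec_weight lv le x))"
  define ecdC where "ecdC = di_dist W F (\<lambda>x. real (ec_weight lv le x) + real H * C' x)"
  define size' where "size' = ec_cut_size V E uv ue C'"
  obtain D' where dD: "demand_ok W ecd0 (ec_A A) h D'" and symD: "symmetric_demand D'"
    and spD: "spars_val size' (sep W ecdC H D') < ereal \<phi>"
    using sp unfolding ec_spars_def Let_def INF_less_iff W_def F_def ecd0_def ecdC_def size'_def H_def
    by auto
  define sep' where "sep' = sep W ecdC H D'"
  have D0: "\<forall>v w. 0 \<le> D' v w" and Dout: "\<forall>v w. (v \<notin> W \<or> w \<notin> W) \<longrightarrow> D' v w = 0"
    and Dsum: "\<forall>v\<in>W. max (\<Sum>w\<in>W. D' v w) (\<Sum>w\<in>W. D' w v) \<le> ec_A A v"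
    and Dlen: "\<forall>v w. D' v w > 0 \<longrightarrow> ecd0 v w \<le> ereal (real h)"
    using dD by (auto simp: demand_ok_def)
  have sep'_pos: "0 < sep'" and ratio: "size' / sep' < \<phi>"
    using spars_valD[OF spD] sep_nonneg[OF D0, of W ecdC H] by (auto simp: sep'_def)
  have fW: "finite W" unfolding W_def using fV by (rule finite_ecv)
  have zero1: "D' x y = 0" if "snd x \<noteq> Mid" for x y
  proof (cases "x \<in> W \<and> y \<in> W")
    case True
    have "(\<Sum>w\<in>W. D' x w) \<le> 0" using Dsum True that by (auto simp: ec_A_def)
    moreover have "0 \<le> (\<Sum>w\<in>W. D' x w)" using D0 by (intro sum_nonneg) blast
    ultimately have "(\<Sum>w\<in>W. D' x w) = 0" by linarith
    then show ?thesis using sum_nonneg_eq_0_iff[OF fW, of "D' x"] D0 True by auto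
  next
    case False then show ?thesis using Dout by blast
  qed
  have zero2: "D' x y = 0" if "snd y \<noteq> Mid" for x y
  proof -
    have "D' x y = D' y x" by (rule symD[unfolded symmetric_demand_def, rule_format])
    then show ?thesis using zero1[OF that, of x] by simp
  qed
  define Cv where "Cv v = max (C' ((v, In), (v, Mid))) (max (C' ((v, Mid), (v, Out))) (C' ((v, In), (v, Out))))" for v
  define Ce where "Ce e = (if e \<in> E then Max (C' ` ecQ e) else 0)" for e
  have Ce_pair: "Ce {a, b} = max (C' ((a, Out), (b, In))) (C' ((b, Out), (a, In)))"
    if "{a, b} \<in> E" "a \<noteq> b" for a b
  proof -
    have "Ce {a, b} = Max (C' ` ecQ {a, b})" using that(1) by (simp add: Ce_def)
    also have "\<dots> = Max {C' ((a, Out), (b, In)), C' ((b, Out), (a, In))}"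
      by (simp only: ecQ_pair[OF that(2)] image_insert image_empty)
    also have "\<dots> = max (C' ((a, Out), (b, In))) (C' ((b, Out), (a, In)))"
      by (simp add: max.commute)
    finally show ?thesis .
  qed
  have arcs: "v \<in> V \<Longrightarrow> ((v, In), (v, Mid)) \<in> ec_arcs V E \<and> ((v, Mid), (v, Out)) \<in> ec_arcs V E
      \<and> ((v, In), (v, Out)) \<in> ec_arcs V E" for v
    by (simp add: arc_mem)
  have edge: "\<exists>a b. a \<noteq> b \<and> e = {a, b} \<and> ((a, Out), (b, In)) \<in> ec_arcs V E
      \<and> ((b, Out), (a, In)) \<in> ec_arcs V E \<and> Ce e = max (C' ((a, Out), (b, In))) (C' ((b, Out), (a, In)))"
    if e: "e \<in> E" for e
  proof -
    obtain a b where ab: "a \<noteq> b" "e = {a, b}" using gE e by blast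
    have e': "{a, b} \<in> E" using ab e by simp
    have e'': "{b, a} \<in> E" using e' by (simp add: insert_commute)
    show ?thesis
      using ab arc_mem(4)[OF e' ab(1), of V] arc_mem(4)[OF e'' ab(1)[symmetric], of V] Ce_pair[OF e' ab(1)]
      by blast
  qed
  have vcut: "vc_cut H V E Cv Ce"
    unfolding vc_cut_def
  proof (intro conjI ballI)
    fix v assume "v \<in> V"
    then show "cut_val H (Cv v)" using arcs cutv unfolding Cv_def by (intro cut_val_max) auto
  next
    fix e assume e: "e \<in> E"
    then obtain a b where "Ce e = max (C' ((a, Out), (b, In))) (C' ((b, Out), (a, In)))"
      "((a, Out), (b, In)) \<in> ec_arcs V E" "((b, Out), (a, In)) \<in> ec_arcs V E"
      using edge by blast
    then show "cut_val H (Ce e)" using cutv by (simp add: cut_val_max)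
  qed
  have Cv0: "\<forall>v\<in>V. 0 \<le> Cv v" using arcs C'0 by (auto simp: Cv_def le_max_iff_disj)
  have Ce0: "\<forall>e\<in>E. 0 \<le> Ce e"
  proof
    fix e assume e: "e \<in> E"
    then obtain a b where "Ce e = max (C' ((a, Out), (b, In))) (C' ((b, Out), (a, In)))"
      "((a, Out), (b, In)) \<in> ec_arcs V E" "((b, Out), (a, In)) \<in> ec_arcs V E"
      using edge by blast
    then show "0 \<le> Ce e" using C'0 by (simp add: le_max_iff_disj)
  qed
  define size where "size = vc_cut_size V E uv ue Cv Ce"
  have size0: "0 \<le> size"
    unfolding size_def vc_cut_size_def using Cv0 Ce0
    by (intro add_nonneg_nonneg sum_nonneg mult_nonneg_nonneg) auto
  have size_le: "size \<le> size'"
  proof -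
    have "size' = (\<Sum>v\<in>V. real (uv v) * (C' ((v, In), (v, Mid)) + C' ((v, Mid), (v, Out)) + C' ((v, In), (v, Out))))
      + (\<Sum>e\<in>E. real (ue e) * (\<Sum>x\<in>ecQ e. C' x))"
      unfolding size'_def by (rule ec_cut_size_decomp[OF fV gE])
    moreover have "(\<Sum>v\<in>V. real (uv v) * Cv v) \<le> (\<Sum>v\<in>V. real (uv v) * (C' ((v, In), (v, Mid)) + C' ((v, Mid), (v, Out)) + C' ((v, In), (v, Out))))"
    proof (intro sum_mono mult_left_mono)
      fix v assume "v \<in> V"
      then show "Cv v \<le> C' ((v, In), (v, Mid)) + C' ((v, Mid), (v, Out)) + C' ((v, In), (v, Out))"
        using arcs C'0 unfolding Cv_def by (auto simp: max_def)
    qed simp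
    moreover have "(\<Sum>e\<in>E. real (ue e) * Ce e) \<le> (\<Sum>e\<in>E. real (ue e) * (\<Sum>x\<in>ecQ e. C' x))"
    proof (intro sum_mono mult_left_mono)
      fix e assume e: "e \<in> E"
      then obtain a b where ab: "a \<noteq> b" "e = {a, b}" "Ce e = max (C' ((a, Out), (b, In))) (C' ((b, Out), (a, In)))"
        "((a, Out), (b, In)) \<in> ec_arcs V E" "((b, Out), (a, In)) \<in> ec_arcs V E"
        using edge by blast
      have "(\<Sum>x\<in>ecQ e. C' x) = C' ((a, Out), (b, In)) + C' ((b, Out), (a, In))"
        using ab(1,2) by (simp add: ecQ_pair)
      then show "Ce e \<le> (\<Sum>x\<in>ecQ e. C' x)"
        using ab(3-5) C'0 by (simp add: max_def)
    qed simp
    ultimately show ?thesis unfolding size_def vc_cut_size_def by linarith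
  qed
  define D where "D v w = D' (v, Mid) (w, Mid)" for v w
  define Lv where "Lv v = real (lv v) + real H * Cv v" for v
  define Le where "Le e = real (le e) + real H * Ce e" for e
  define dist0 where "dist0 = vc_dist V E (\<lambda>v. real (lv v)) (\<lambda>e. real (le e))"
  define distC where "distC = vc_dist V E Lv Le"
  have rowD: "(\<Sum>w\<in>V. D v w) = (\<Sum>y\<in>W. D' (v, Mid) y)" for v
    unfolding D_def W_def using zero2 by (intro sum_W_Mid[symmetric] fV) auto
  have colD: "(\<Sum>w\<in>V. D w v) = (\<Sum>y\<in>W. D' y (v, Mid))" for v
    unfolding D_def W_def using zero1 by (intro sum_W_Mid[symmetric] fV) auto
  have ok: "demand_ok V dist0 A h D"
    unfolding demand_ok_def
  proof (intro conjI allI impI ballI)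
    fix v w show "0 \<le> D v w" using D0 by (simp add: D_def)
  next
    fix v w assume "v \<notin> V \<or> w \<notin> V"
    then show "D v w = 0" using Dout by (auto simp: D_def W_def)
  next
    fix v assume v: "v \<in> V"
    then have "(v, Mid) \<in> W" by (simp add: W_def)
    then show "max (\<Sum>w\<in>V. D v w) (\<Sum>w\<in>V. D w v) \<le> A v"
      using Dsum rowD[of v] colD[of v] by (fastforce simp: ec_A_def)
  next
    fix v w assume pos: "D v w > 0"
    then have e: "ecd0 (v, Mid) (w, Mid) \<le> ereal (real h)" using Dlen by (simp add: D_def)
    from pos have nz: "D' (v, Mid) (w, Mid) \<noteq> 0" by (simp add: D_def)
    have "(v, Mid) \<in> W \<and> (w, Mid) \<in> W"
    proof (rule ccontr)
      assume "\<not> ((v, Mid) \<in> W \<and> (w, Mid) \<in> W)"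
      then have "D' (v, Mid) (w, Mid) = 0" using Dout by blast
      then show False using nz by simp
    qed
    then have vV: "v \<in> V" and wV: "w \<in> V" by (simp_all add: W_def)
    show "dist0 v w \<le> ereal (real h)"
    proof (cases "v = w")
      case True then show ?thesis by (simp add: dist0_def vc_dist_refl)
    next
      case False
      have "dist0 v w \<le> ecd0 (v, Mid) (w, Mid)"
        unfolding dist0_def ecd0_def W_def F_def
        by (rule vc_le_ec_dist[OF False]) (auto simp: ec_weight_def)
      then show ?thesis using e by simp
    qed
  qed
  define sepD where "sepD = sep V distC H D"
  have sep_ge: "sep' \<le> sepD"
  proof -
    have sep'eq: "sep' = (\<Sum>p\<in>V \<times> V. if ecdC (fst p, Mid) (snd p, Mid) > ereal (real H)
        then D (fst p) (snd p) else 0)"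
      unfolding sep'_def sep_def W_def
      apply (subst sum_WW_Mid[OF fV])
       apply (intro allI impI)
       apply (erule disjE)
        apply (simp add: zero1)
       apply (simp add: zero2)
      apply (simp add: D_def cong: if_cong)
      done
    show ?thesis unfolding sep'eq sepD_def sep_def
    proof (intro sum_mono)
      fix p assume p: "p \<in> V \<times> V"
      obtain v w where pvw: "p = (v, w)" by (cases p)
      have v: "v \<in> V" using p pvw by simp
      have "ecdC (v, Mid) (w, Mid) \<le> distC v w"
        unfolding ecdC_def distC_def W_def F_def
      proof (rule ec_le_vc_dist[OF v])
        show "\<forall>a\<in>V. real (ec_weight lv le ((a, In), (a, Mid))) + real H * C' ((a, In), (a, Mid)) \<le> Lv a"
          unfolding Lv_def Cv_def ec_weight_def by (auto intro: mult_left_mono)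
        show "\<forall>a\<in>V. real (ec_weight lv le ((a, Mid), (a, Out))) + real H * C' ((a, Mid), (a, Out)) \<le> Lv a"
          unfolding Lv_def Cv_def ec_weight_def by (auto intro: mult_left_mono)
        show "\<forall>a\<in>V. real (ec_weight lv le ((a, In), (a, Out))) + real H * C' ((a, In), (a, Out)) \<le> Lv a"
          unfolding Lv_def Cv_def ec_weight_def by (auto intro: mult_left_mono)
        show "\<forall>a b. {a, b} \<in> E \<longrightarrow> a \<noteq> b \<longrightarrow> real (ec_weight lv le ((a, Out), (b, In))) + real H * C' ((a, Out), (b, In)) \<le> Le {a, b}"
          unfolding Le_def ec_weight_def by (auto simp: Ce_pair intro: mult_left_mono)
      qed
      then show "(if ecdC (fst p, Mid) (snd p, Mid) > ereal (real H) then D (fst p) (snd p) else 0)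
          \<le> (if distC (fst p) (snd p) > ereal (real H) then D (fst p) (snd p) else 0)"
        using pvw D0 by (auto simp: D_def)
    qed
  qed
  have "vc_spars h s V E lv le uv ue Cv Ce A \<le> spars_val size sepD"
    unfolding vc_spars_def Let_def
    apply (fold H_def)
    apply (fold Lv_def Le_def)
    apply (fold dist0_def distC_def size_def)
    unfolding sepD_def using ok by (intro INF_lower) auto
  also have "spars_val size sepD = ereal (size / sepD)"
    using sep'_pos sep_ge by (simp add: spars_val_def)
  also have "size / sepD < \<phi>"
  proof -
    have "size / sepD \<le> size / sep'"
      using size0 sep'_pos sep_ge by (intro divide_left_mono) auto
    also have "\<dots> \<le> size' / sep'"
      using size_le sep'_pos by (intro divide_right_mono) auto
    finally show ?thesis using ratio by simp
  qed
  finally show ?thesis using vcut by (auto simp: H_def)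
qed


theorem lemma4p8:
  fixes V :: "'v set" and E :: "'v set set"
    and lv uv :: "'v \<Rightarrow> nat" and le ue :: "'v set \<Rightarrow> nat"
    and A :: "'v \<Rightarrow> real" and h s :: nat and \<phi> :: real
  assumes "vc_graph V E lv le uv ue A" and "0 < h" and "0 < s"
  shows "((\<exists>Cv Ce. vc_cut (h * s) V E Cv Ce \<and> vc_spars h s V E lv le uv ue Cv Ce A < ereal \<phi>)
            \<longrightarrow> (\<exists>C'. ec_cut (h * s) V E C' \<and> ec_spars h s V E lv le uv ue C' A < ereal (3 * \<phi>)))
       \<and> ((\<exists>C'. ec_cut (h * s) V E C' \<and> ec_spars h s V E lv le uv ue C' A < ereal \<phi>)
            \<longrightarrow> (\<exists>Cv Ce. vc_cut (h * s) V E Cv Ce \<and> vc_spars h s V E lv le uv ue Cv Ce A < ereal \<phi>))"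
  using part1[OF assms(1)] part2[OF assms(1)] by blast

end
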